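(* Let $T$ be a tiling of $\mathbb{R}^d$ and let $\Omega_T$ be its tiling space. For $T_1,T_2\in\Omega_T$ and $r>0$ define \[ d_r(T_1,T_2)=\inf\{\varepsilon>0\mid \text{there exists } u\in\mathbb{R}^d \text{ with } |u|<\varepsilon \text{ and } (T_1+u)\cap rD=T_2\cap rD\}, \] with $d_r(T_1,T_2)=\infty$ if no $u\in\mathbb{R}^d$ satisfies $(T_1+u)\cap rD=T_2\cap rD$. Then for all $T_1,T_2,T_3\in\Omega_T$: (i) $d_r(T_1,T_1)=0$ for all $r>0$; (ii) if $r_1\le r_2$ then $d_{r_1}(T_1,T_2)\le d_{r_2}(T_1,T_2)$, and if $d_r(T_1,T_2)<\varepsilon$ then there is $\delta>0$ with $d_{r+\delta}(T_1,T_2)<\varepsilon$; (iii) for $r_1,r_2,r_3>0$, if $d_{r_1+r_2}(T_1,T_2)<r_3$ and $d_{r_1+r_2+r_3}(T_2,T_3)<r_2$, then $d_{r_1}(T_1,T_3)\le d_{r_1+r_2}(T_1,T_2)+d_{r_1+r_2+r_3}(T_2,T_3)$.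
   Context: A tiling of $\mathbb{R}^d$ ($d\ge1$) is a collection $T$ of subsets of $\mathbb{R}^d$ (tiles) such that: each tile is a translate of one of finitely many subsets $\tau_1,\dots,\tau_n$ (the prototiles); each tile is homeomorphic to a closed $d$-disk; the union of the tiles is $\mathbb{R}^d$; distinct tiles have disjoint interiors. For $A\subset\mathbb{R}^d$, $T\cap A=\{t\in T\mid t\cap A\ne\emptyset\}$. For $x\in\mathbb{R}^d$, $T+x=\{t+x\mid t\in T\}$. $rD=\{x\in\mathbb{R}^d\mid |x|\le r\}$ and $B_\rho(0)$ is the open ball of radius $\rho$. On the orbit $\{T+x\mid x\in\mathbb{R}^d\}$ define the metric $d(T,T')$ as the infimum of the set of $\varepsilon>0$ for which there exist $u,v\in\mathbb{R}^d$ with $|u|,|v|<\varepsilon$ and $(T+u)\cap B_{1/\varepsilon}(0)=(T'+v)\cap B_{1/\varepsilon}(0)$, together with the number $1/\sqrt2$. The tiling space $\Omega_T$ is the metric completion of the orbit with respect to $d$; each element of $\Omega_T$ is regarded as a tiling of $\mathbb{R}^d$ whose tiles are translates of prototiles of $T$ (every patch of it appears in $T$). *)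

theory Defs
  imports "HOL-Analysis.Analysis" "HOL-Library.Extended_Real"
begin

text \<open>Tilings of R^d, modelled on a Euclidean space type 'a (d = DIM('a)).
  A tiling is a set of tiles (subsets of 'a).\<close>

definition translate_tiling :: "'a::euclidean_space set set \<Rightarrow> 'a \<Rightarrow> 'a set set" where
  "translate_tiling T x = (\<lambda>t. (\<lambda>y. y + x) ` t) ` T"

text \<open>T \<inter> A in the paper: tiles of T meeting A.\<close>
definition patch :: "'a set set \<Rightarrow> 'a set \<Rightarrow> 'a set set" where
  "patch T A = {t \<in> T. t \<inter> A \<noteq> {}}"

definition is_tiling :: "'a::euclidean_space set set \<Rightarrow> bool" where
  "is_tiling T \<longleftrightarrow>
     (\<exists>P. finite P \<and> (\<forall>t\<in>T. \<exists>p\<in>P. \<exists>x. t = (\<lambda>y. y + x) ` p))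
   \<and> (\<forall>t\<in>T. t homeomorphic (cball (0::'a) 1))
   \<and> \<Union>T = UNIV
   \<and> (\<forall>s\<in>T. \<forall>t\<in>T. s \<noteq> t \<longrightarrow> interior s \<inter> interior t = {})"

definition tiling_dist :: "'a::euclidean_space set set \<Rightarrow> 'a set set \<Rightarrow> real" where
  "tiling_dist T T' = Inf ({e. e > 0 \<and> (\<exists>u v. norm u < e \<and> norm v < e \<and>
        patch (translate_tiling T u) (ball 0 (1/e)) = patch (translate_tiling T' v) (ball 0 (1/e)))}
      \<union> {1 / sqrt 2})"

text \<open>Tiling space: tilings that are limits (w.r.t. d) of translates of T,
  i.e. the metric completion of the orbit, with elements regarded as tilings.\<close>
definition tiling_space :: "'a::euclidean_space set set \<Rightarrow> 'a set set set" where
  "tiling_space T = {T'. is_tiling T' \<and>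
      (\<exists>x :: nat \<Rightarrow> 'a. (\<lambda>n. tiling_dist (translate_tiling T (x n)) T') \<longlonglongrightarrow> 0)}"

text \<open>d_r, with value \<infinity> when no translation works (Inf {} = \<infinity> in ereal).\<close>
definition dist_r :: "real \<Rightarrow> 'a::euclidean_space set set \<Rightarrow> 'a set set \<Rightarrow> ereal" where
  "dist_r r T1 T2 = Inf {ereal e | e. e > 0 \<and> (\<exists>u. norm u < e \<and>
        patch (translate_tiling T1 u) (cball 0 r) = patch T2 (cball 0 r))}"

end

theory Submission
  imports Defs
begin

lemma int_tr: "interior ((\<lambda>y. y + x) ` p) = (\<lambda>y. y + x) ` interior (p::'a::euclidean_space set)"
  using interior_translation[of x p] by (simp add: add.commute)

lemma cpt_tr: "compact p \<Longrightarrow> compact ((\<lambda>y. y + x) ` (p::'a::euclidean_space set))"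
  using compact_translation[of p x] by (simp add: add.commute)

lemma tile_props:
  fixes t :: "'a::euclidean_space set"
  assumes "t homeomorphic (cball (0::'a) 1)"
  shows "compact t" "interior t \<noteq> {}"
proof -
  show "compact t" using assms homeomorphic_compactness compact_cball by blast
  have "interior t homeomorphic interior (cball (0::'a) 1)"
    by (rule homeomorphic_interiors_same_dimension[OF assms]) simp
  then have "interior t homeomorphic ball (0::'a) 1" by simp
  then show "interior t \<noteq> {}" by auto
qed

lemma sep_finite:
  fixes Y :: "'a::euclidean_space set"
  assumes "bounded Y" "\<rho> > 0" "\<And>a b. a \<in> Y \<Longrightarrow> b \<in> Y \<Longrightarrow> a \<noteq> b \<Longrightarrow> dist a b \<ge> \<rho>"
  shows "finite Y"
proof (rule ccontr)
  assume "infinite Y"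
  then obtain x where "x islimpt Y" using bounded_infinite_imp_islimpt[of Y Y] assms by blast
  then have inf: "infinite (Y \<inter> ball x (\<rho>/2))" using assms(2) unfolding islimpt_eq_infinite_ball by simp
  then obtain a where a: "a \<in> Y \<inter> ball x (\<rho>/2)" using infinite_imp_nonempty by blast
  have "infinite (Y \<inter> ball x (\<rho>/2) - {a})" using inf by simp
  then obtain b where b: "b \<in> Y \<inter> ball x (\<rho>/2) - {a}" using infinite_imp_nonempty by blast
  have "dist a x < \<rho>/2" "dist b x < \<rho>/2" using a b by (auto simp: dist_commute)
  then have "dist a b < \<rho>" using dist_triangle[of a b x] dist_commute[of x b] by linarith
  with assms(3) a b show False by force
qed

lemma locfin:
  fixes S :: "'a::euclidean_space set set"
  assumes "is_tiling S" "bounded B"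
  shows "finite {t\<in>S. t \<inter> B \<noteq> {}}"
proof -
  note H = assms(1)[unfolded is_tiling_def]
  have hom: "\<forall>t\<in>S. t homeomorphic (cball (0::'a) 1)" using H by (elim conjE)
  have disj: "\<forall>s\<in>S. \<forall>t\<in>S. s \<noteq> t \<longrightarrow> interior s \<inter> interior t = {}" using H by (elim conjE)
  from conjunct1[OF H] obtain P where P0: "finite P \<and> (\<forall>t\<in>S. \<exists>p\<in>P. \<exists>x. t = (\<lambda>y. y + x) ` p)" ..
  have P1: "finite P" using P0 by (rule conjunct1)
  have P2: "\<forall>t\<in>S. \<exists>p\<in>P. \<exists>x. t = (\<lambda>y. y + x) ` p" using P0 by (rule conjunct2)
  note P = P1 P2
  define Q where "Q p = {t\<in>S. t \<inter> B \<noteq> {} \<and> (\<exists>x. t = (\<lambda>y. y + x) ` p)}" for p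
  have sub: "{t\<in>S. t \<inter> B \<noteq> {}} \<subseteq> (\<Union>p\<in>P. Q p)"
  proof
    fix t assume "t \<in> {t\<in>S. t \<inter> B \<noteq> {}}"
    then have t: "t \<in> S" "t \<inter> B \<noteq> {}" by simp_all
    from P2 t(1) have "\<exists>p\<in>P. \<exists>x. t = (\<lambda>y. y + x) ` p" by (rule bspec)
    then obtain p where p: "p \<in> P" "\<exists>x. t = (\<lambda>y. y + x) ` p" by (rule bexE)
    then have "t \<in> Q p" unfolding Q_def using t by simp
    with p(1) show "t \<in> (\<Union>p\<in>P. Q p)" by (rule UN_I)
  qed
  have "finite (Q p)" for p
  proof (cases "Q p = {}")
    case True then show ?thesis by simp
  next
    case False
    then obtain t0 x0 where t0: "t0 \<in> S" "t0 = (\<lambda>y. y + x0) ` p" unfolding Q_def by blast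
    have "compact t0" "interior t0 \<noteq> {}" using tile_props hom t0 by auto
    have peq: "p = (\<lambda>y. y + (-x0)) ` t0" using t0(2) by (auto simp: image_image)
    have "compact p" using cpt_tr[OF \<open>compact t0\<close>, of "-x0"] peq by simp
    have "interior p \<noteq> {}" using \<open>interior t0 \<noteq> {}\<close> int_tr[of x0 p] t0(2) by auto
    then obtain c where c: "c \<in> interior p" by blast
    then obtain \<rho> where rho: "\<rho> > 0" "ball c \<rho> \<subseteq> interior p"
      using open_contains_ball open_interior by blast
    obtain bp where bp: "\<forall>y\<in>p. norm y \<le> bp" using compact_imp_bounded[OF \<open>compact p\<close>] bounded_iff by blast
    obtain bB where bB: "\<forall>y\<in>B. norm y \<le> bB" using assms(2) bounded_iff by blast
    define xf where "xf t = (SOME x. t = (\<lambda>y. y + x) ` p)" for t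
    have xf0: "t = (\<lambda>y. y + xf t) ` p" if "t \<in> Q p" for t
    proof -
      have "\<exists>x. t = (\<lambda>y. y + x) ` p" using that unfolding Q_def by blast
      then show ?thesis unfolding xf_def by (rule someI_ex)
    qed
    have xf: "(\<lambda>y. y + xf t) ` p = t" if "t \<in> Q p" for t
      using xf0[OF that] by (rule sym)
    have inj: "inj_on xf (Q p)"
    proof (rule inj_onI)
      fix s t assume "s \<in> Q p" "t \<in> Q p" "xf s = xf t"
      then show "s = t" using xf[of s] xf[of t] by metis
    qed
    have bd: "bounded (xf ` Q p)"
      unfolding bounded_iff
    proof (intro exI ballI)
      fix z assume "z \<in> xf ` Q p"
      then obtain t where t: "t \<in> Q p" "z = xf t" by blast
      then have "t \<inter> B \<noteq> {}" unfolding Q_def by blast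
      then have "(\<lambda>y. y + z) ` p \<inter> B \<noteq> {}" using xf[OF t(1)] t(2) by simp
      then obtain y where y: "y \<in> p" "y + z \<in> B" by blast
      have "norm z \<le> norm (y + z) + norm y" using norm_triangle_ineq4[of "y+z" y] by simp
      also have "\<dots> \<le> bB + bp" using y bB bp by (meson add_mono)
      finally show "norm z \<le> bB + bp" .
    qed
    have sep: "dist a b \<ge> \<rho>" if ab: "a \<in> xf ` Q p" "b \<in> xf ` Q p" "a \<noteq> b" for a b
    proof (rule ccontr)
      assume "\<not> dist a b \<ge> \<rho>"
      then have d: "dist a b < \<rho>" by simp
      obtain t s where ts: "t \<in> Q p" "a = xf t" "s \<in> Q p" "b = xf s" using ab by blast
      have "t \<noteq> s" using ts ab by blast
      moreover have "t \<in> S" "s \<in> S" using ts unfolding Q_def by auto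
      ultimately have e: "interior t \<inter> interior s = {}" using disj by blast
      have eqs: "(\<lambda>y. y + b) ` p = s" using xf[OF ts(3)] ts(4) by simp
      have "c + b \<in> (\<lambda>y. y + b) ` interior p" using c by (rule rev_image_eqI) simp
      then have cs: "c + b \<in> interior s" using int_tr[of b p] eqs by simp
      have "dist c (c + b - a) = dist a b" by (simp add: dist_norm algebra_simps norm_minus_commute)
      then have "c + b - a \<in> interior p" using rho d by auto
      then have ct0: "c + b \<in> (\<lambda>y. y + a) ` interior p" by (rule rev_image_eqI) simp
      have eqt: "(\<lambda>y. y + a) ` p = t" using xf[OF ts(1)] ts(2) by simp
      have ct: "c + b \<in> interior t" using ct0 int_tr[of a p] eqt by simp
      show False using e cs ct by blast
    qed
    have "finite (xf ` Q p)" using sep_finite[OF bd rho(1)] sep by blast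
    then show ?thesis using finite_imageD inj by blast
  qed
  then have "finite (\<Union>p\<in>P. Q p)" using P(1) by blast
  then show ?thesis using sub finite_subset by blast
qed


lemma patch_sub: "A \<subseteq> B \<Longrightarrow> patch S A \<subseteq> patch S B"
  unfolding patch_def by blast

lemma patch_mono: "A \<subseteq> B \<Longrightarrow> patch S B = patch S' B \<Longrightarrow> patch S A = patch S' A"
  unfolding patch_def by (simp add: set_eq_iff) blast

lemma PT: "patch (translate_tiling S v) A = translate_tiling (patch S ((\<lambda>y. y - v) ` A)) v"
proof
  show "patch (translate_tiling S v) A \<subseteq> translate_tiling (patch S ((\<lambda>y. y - v) ` A)) v"
  proof
    fix t' assume "t' \<in> patch (translate_tiling S v) A"
    then obtain t z where t: "t \<in> S" "t' = (\<lambda>y. y + v) ` t" "z \<in> t" "z + v \<in> A"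
      unfolding patch_def translate_tiling_def by blast
    then have "z \<in> (\<lambda>y. y - v) ` A" by (metis add_diff_cancel image_eqI)
    then have "t \<in> patch S ((\<lambda>y. y - v) ` A)" unfolding patch_def using t by blast
    then show "t' \<in> translate_tiling (patch S ((\<lambda>y. y - v) ` A)) v"
      unfolding translate_tiling_def using t(2) by blast
  qed
  show "translate_tiling (patch S ((\<lambda>y. y - v) ` A)) v \<subseteq> patch (translate_tiling S v) A"
  proof
    fix t' assume "t' \<in> translate_tiling (patch S ((\<lambda>y. y - v) ` A)) v"
    then obtain t a where t: "t \<in> S" "t' = (\<lambda>y. y + v) ` t" "a - v \<in> t" "a \<in> A"
      unfolding patch_def translate_tiling_def by blast
    then have "a \<in> t'" by (metis diff_add_cancel image_eqI)
    then show "t' \<in> patch (translate_tiling S v) A"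
      unfolding patch_def translate_tiling_def using t by blast
  qed
qed

lemma tt_tt: "translate_tiling (translate_tiling S u) v = translate_tiling S (u + v)"
  unfolding translate_tiling_def image_image by (simp add: add.assoc)

lemma tt0: "translate_tiling S 0 = S"
  unfolding translate_tiling_def by simp

lemma shrink:
  fixes S :: "'a::euclidean_space set set"
  assumes cpt: "\<forall>t\<in>S. compact t" and fin: "finite (patch S (cball 0 (r+1)))"
  shows "\<exists>\<delta>>0. \<forall>\<delta>'. 0 \<le> \<delta>' \<and> \<delta>' \<le> \<delta> \<longrightarrow> patch S (cball 0 (r+\<delta>')) = patch S (cball 0 r)"
proof -
  define F where "F = patch S (cball 0 (r+1)) - patch S (cball 0 r)"
  have finF: "finite F" using fin unfolding F_def by simp
  have "\<exists>d>0. t \<inter> cball 0 (r + d) = {}" if "t \<in> F" for t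
  proof -
    have t: "t \<in> S" "t \<noteq> {}" "t \<inter> cball 0 r = {}" using that unfolding F_def patch_def by auto
    obtain y where y: "y \<in> t" "\<forall>z\<in>t. norm y \<le> norm z"
      using continuous_attains_inf[OF _ t(2), of norm] cpt t(1) continuous_on_norm_id by blast
    have "norm y > r" using y(1) t(3) by auto
    have "\<forall>z\<in>t. norm z > r + (norm y - r)/2"
    proof
      fix z assume "z \<in> t"
      then have "norm y \<le> norm z" using y(2) by blast
      then show "norm z > r + (norm y - r)/2" using \<open>norm y > r\<close> by (simp add: field_simps)
    qed
    then show ?thesis using \<open>norm y > r\<close>
      by (intro exI[of _ "(norm y - r)/2"]) (auto simp: mem_cball_0 not_le[symmetric])
  qed
  then obtain df where df: "\<forall>t\<in>F. df t > 0 \<and> t \<inter> cball 0 (r + df t) = {}" by metis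
  define \<delta> where "\<delta> = Min (insert 1 (df ` F))"
  have dpos: "\<delta> > 0" unfolding \<delta>_def using finF df by (simp add: Min_gr_iff)
  have d1: "\<delta> \<le> 1" "\<forall>t\<in>F. \<delta> \<le> df t" unfolding \<delta>_def using finF by auto
  show ?thesis
  proof (intro exI[of _ \<delta>] conjI allI impI dpos)
    fix \<delta>' assume h: "0 \<le> \<delta>' \<and> \<delta>' \<le> \<delta>"
    show "patch S (cball 0 (r+\<delta>')) = patch S (cball 0 r)"
    proof
      show "patch S (cball 0 r) \<subseteq> patch S (cball 0 (r+\<delta>'))" using h by (intro patch_sub) auto
      show "patch S (cball 0 (r+\<delta>')) \<subseteq> patch S (cball 0 r)"
      proof
        fix t assume t: "t \<in> patch S (cball 0 (r+\<delta>'))"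
        show "t \<in> patch S (cball 0 r)"
        proof (rule ccontr)
          assume n: "t \<notin> patch S (cball 0 r)"
          have "r+\<delta>' \<le> r+1" using h d1 by linarith
          then have "cball 0 (r+\<delta>') \<subseteq> cball (0::'a) (r+1)" by auto
          then have "t \<in> patch S (cball 0 (r+1))" using t patch_sub by blast
          then have "t \<in> F" using n unfolding F_def by simp
          then have "t \<inter> cball 0 (r + df t) = {}" "\<delta>' \<le> df t" using df d1 h by auto
          moreover have "t \<inter> cball 0 (r+\<delta>') \<noteq> {}" using t unfolding patch_def by simp
          ultimately show False by (auto simp: mem_cball)
        qed
      qed
    qed
  qed
qed

definition Eset :: "real \<Rightarrow> 'a::euclidean_space set set \<Rightarrow> 'a set set \<Rightarrow> real set" where
  "Eset r A B = {e. e > 0 \<and> (\<exists>u. norm u < e \<and>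
        patch (translate_tiling A u) (cball 0 r) = patch B (cball 0 r))}"

lemma dist_eq: "dist_r r A B = Inf (ereal ` Eset r A B)"
  unfolding dist_r_def Eset_def by (rule arg_cong[where f=Inf]) blast

lemma D1: "e \<in> Eset r A B \<Longrightarrow> dist_r r A B \<le> ereal e"
  unfolding dist_eq by (rule Inf_lower) simp

lemma D2: "dist_r r A B < ereal c \<Longrightarrow> \<exists>e\<in>Eset r A B. e < c"
  unfolding dist_eq by (auto simp: Inf_less_iff)

lemma D3: "0 \<le> dist_r r A B"
  unfolding dist_eq by (rule Inf_greatest) (auto simp: Eset_def)

lemma part1: "dist_r r A A = 0"
proof (rule antisym[OF _ D3])
  show "dist_r r A A \<le> 0"
  proof (rule ereal_le_epsilon2)
    fix e :: real assume "0 < e"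
    then have "e \<in> Eset r A A" unfolding Eset_def by (auto intro!: exI[of _ 0] simp: tt0)
    then show "dist_r r A A \<le> 0 + ereal e" using D1 by simp
  qed
qed

lemma part2a: "r1 \<le> r2 \<Longrightarrow> dist_r r1 A B \<le> dist_r r2 A B"
  unfolding dist_eq
proof (rule Inf_superset_mono, rule image_mono)
  assume "r1 \<le> r2"
  then have sub: "cball (0::'a) r1 \<subseteq> cball 0 r2" by auto
  show "Eset r2 A B \<subseteq> Eset r1 A B"
  proof
    fix e assume "e \<in> Eset r2 A B"
    then obtain u where "e > 0" "norm u < e" "patch (translate_tiling A u) (cball 0 r2) = patch B (cball 0 r2)"
      unfolding Eset_def by blast
    then show "e \<in> Eset r1 A B" unfolding Eset_def using patch_mono[OF sub] by blast
  qed
qed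

lemma fin_tt:
  assumes "is_tiling S" shows "finite (patch (translate_tiling S u) (cball 0 R))"
proof -
  have "bounded ((\<lambda>y. y - u) ` cball 0 R)"
    using compact_imp_bounded compact_translation_subtract compact_cball by blast
  then have "finite (patch S ((\<lambda>y. y - u) ` cball 0 R))" using locfin[OF assms] unfolding patch_def by blast
  moreover have "patch (translate_tiling S u) (cball 0 R) = translate_tiling (patch S ((\<lambda>y. y - u) ` cball 0 R)) u"
    by (rule PT)
  ultimately show ?thesis by (simp add: translate_tiling_def)
qed

lemma cpt_tt:
  assumes "is_tiling S" shows "\<forall>t\<in>translate_tiling S u. compact t"
proof
  fix t assume "t \<in> translate_tiling S u"
  then obtain t0 where t0: "t0 \<in> S" "t = (\<lambda>y. y + u) ` t0" unfolding translate_tiling_def by blast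
  have "\<forall>t\<in>S. t homeomorphic (cball (0::'a) 1)" using assms unfolding is_tiling_def by (elim conjE)
  then have "compact t0" using t0(1) tile_props(1) by blast
  then show "compact t" using t0(2) cpt_tr by simp
qed

lemma part2b:
  assumes "is_tiling A" "is_tiling B" "dist_r r A B < ereal e"
  shows "\<exists>\<delta>>0. dist_r (r + \<delta>) A B < ereal e"
proof -
  obtain e' u where e': "e' < e" "e' > 0" "norm u < e'"
    and eq: "patch (translate_tiling A u) (cball 0 r) = patch B (cball 0 r)"
    using D2[OF assms(3)] unfolding Eset_def by blast
  obtain d1 where d1: "d1 > 0" "\<forall>\<delta>'. 0 \<le> \<delta>' \<and> \<delta>' \<le> d1 \<longrightarrow>
      patch (translate_tiling A u) (cball 0 (r+\<delta>')) = patch (translate_tiling A u) (cball 0 r)"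
    using shrink[OF cpt_tt[OF assms(1)] fin_tt[OF assms(1)]] by blast
  have cB: "\<forall>t\<in>B. compact t" using cpt_tt[OF assms(2), of 0] by (simp add: tt0)
  have fB: "finite (patch B (cball 0 (r+1)))" using fin_tt[OF assms(2), of 0] by (simp add: tt0)
  obtain d2 where d2: "d2 > 0" "\<forall>\<delta>'. 0 \<le> \<delta>' \<and> \<delta>' \<le> d2 \<longrightarrow>
      patch B (cball 0 (r+\<delta>')) = patch B (cball 0 r)"
    using shrink[OF cB fB] by blast
  define \<delta> where "\<delta> = min d1 d2"
  have dd: "0 \<le> \<delta>" "\<delta> \<le> d1" "\<delta> \<le> d2" using d1(1) d2(1) unfolding \<delta>_def by auto
  have "patch (translate_tiling A u) (cball 0 (r+\<delta>)) = patch B (cball 0 (r+\<delta>))"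
    using d1(2)[rule_format, of \<delta>] d2(2)[rule_format, of \<delta>] dd eq by simp
  then have "e' \<in> Eset (r+\<delta>) A B" unfolding Eset_def using e' by blast
  then have "dist_r (r + \<delta>) A B \<le> ereal e'" by (rule D1)
  also have "ereal e' < ereal e" using e'(1) by simp
  finally have "dist_r (r + \<delta>) A B < ereal e" .
  moreover have "\<delta> > 0" using d1(1) d2(1) unfolding \<delta>_def by simp
  ultimately show ?thesis by blast
qed

lemma chain:
  fixes T1 :: "'a::euclidean_space set set"
  assumes H1: "patch (translate_tiling T1 u) (cball 0 (r1+r2)) = patch T2 (cball 0 (r1+r2))"
    and H2: "patch (translate_tiling T2 v) (cball 0 (r1+r2+r3)) = patch T3 (cball 0 (r1+r2+r3))"
    and v: "norm v < r2" and r3: "r3 \<ge> 0"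
  shows "patch (translate_tiling T1 (u+v)) (cball 0 r1) = patch T3 (cball 0 r1)"
proof -
  define A' where "A' = (\<lambda>y. y - v) ` cball (0::'a) r1"
  have sub: "A' \<subseteq> cball 0 (r1+r2)"
  proof
    fix z assume "z \<in> A'"
    then obtain y where y: "norm y \<le> r1" "z = y - v" unfolding A'_def by auto
    have "norm z \<le> norm y + norm v" using y(2) norm_triangle_ineq4 by blast
    then show "z \<in> cball 0 (r1+r2)" using y v by simp
  qed
  have "patch (translate_tiling T1 (u+v)) (cball 0 r1) = translate_tiling (patch (translate_tiling T1 u) A') v"
    unfolding A'_def by (simp add: PT[symmetric] tt_tt)
  also have "\<dots> = translate_tiling (patch T2 A') v" using patch_mono[OF sub H1] by simp
  also have "\<dots> = patch (translate_tiling T2 v) (cball 0 r1)" unfolding A'_def by (simp add: PT)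
  also have "\<dots> = patch T3 (cball 0 r1)"
  proof (rule patch_mono[OF _ H2])
    have "r1 \<le> r1+r2+r3" using v r3 norm_ge_zero[of v] by linarith
    then show "cball 0 r1 \<subseteq> cball 0 (r1+r2+r3)" by auto
  qed
  finally show ?thesis .
qed

lemma part3:
  assumes "r2 > 0" "dist_r (r1 + r2) T1 T2 < ereal r3" "dist_r (r1 + r2 + r3) T2 T3 < ereal r2"
  shows "dist_r r1 T1 T3 \<le> dist_r (r1 + r2) T1 T2 + dist_r (r1 + r2 + r3) T2 T3"
proof -
  obtain p where p: "dist_r (r1 + r2) T1 T2 = ereal p"
    using assms(2) D3[of "r1+r2" T1 T2] by (cases "dist_r (r1 + r2) T1 T2") auto
  obtain q where q: "dist_r (r1 + r2 + r3) T2 T3 = ereal q"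
    using assms(3) D3[of "r1+r2+r3" T2 T3] by (cases "dist_r (r1 + r2 + r3) T2 T3") auto
  have r3: "r3 \<ge> 0" using assms(2) D3[of "r1+r2" T1 T2] by (metis ereal_less_eq(5) less_imp_le order_trans ereal_le_less)
  show ?thesis unfolding p q
  proof (rule ereal_le_epsilon2)
    fix \<epsilon> :: real assume "0 < \<epsilon>"
    then have "dist_r (r1 + r2) T1 T2 < ereal (p + \<epsilon>/2)" using p by simp
    then obtain e1 u where e1: "e1 < p + \<epsilon>/2" "e1 > 0" "norm u < e1"
      and H1: "patch (translate_tiling T1 u) (cball 0 (r1+r2)) = patch T2 (cball 0 (r1+r2))"
      using D2 unfolding Eset_def by blast
    have "q < r2" using assms(3) q by simp
    then have "dist_r (r1 + r2 + r3) T2 T3 < ereal (min (q + \<epsilon>/2) r2)" using q \<open>0 < \<epsilon>\<close> by simp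
    then obtain e2 v where e2: "e2 < min (q + \<epsilon>/2) r2" "e2 > 0" "norm v < e2"
      and H2: "patch (translate_tiling T2 v) (cball 0 (r1+r2+r3)) = patch T3 (cball 0 (r1+r2+r3))"
      using D2 unfolding Eset_def by blast
    have "norm (u+v) < e1 + e2" using e1 e2 norm_triangle_ineq[of u v] by linarith
    then have "e1 + e2 \<in> Eset r1 T1 T3" unfolding Eset_def
      using chain[OF H1 H2 _ r3] e1 e2 by (intro CollectI conjI exI[of _ "u+v"]) auto
    then have "dist_r r1 T1 T3 \<le> ereal (e1 + e2)" by (rule D1)
    also have "\<dots> \<le> ereal p + ereal q + ereal \<epsilon>" using e1 e2 by simp
    finally show "dist_r r1 T1 T3 \<le> ereal p + ereal q + ereal \<epsilon>" .
  qed
qed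

theorem proposition3p4:
  fixes T T1 T2 T3 :: "'a::euclidean_space set set"
  assumes "is_tiling T"
    and "T1 \<in> tiling_space T" and "T2 \<in> tiling_space T" and "T3 \<in> tiling_space T"
  shows "(\<forall>r>0. dist_r r T1 T1 = 0)
    \<and> (\<forall>r1 r2. 0 < r1 \<and> r1 \<le> r2 \<longrightarrow> dist_r r1 T1 T2 \<le> dist_r r2 T1 T2)
    \<and> (\<forall>r e. r > 0 \<and> dist_r r T1 T2 < ereal e \<longrightarrow>
          (\<exists>\<delta>>0. dist_r (r + \<delta>) T1 T2 < ereal e))
    \<and> (\<forall>r1 r2 r3. r1 > 0 \<and> r2 > 0 \<and> r3 > 0 \<and>
          dist_r (r1 + r2) T1 T2 < ereal r3 \<and> dist_r (r1 + r2 + r3) T2 T3 < ereal r2 \<longrightarrow>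
          dist_r r1 T1 T3 \<le> dist_r (r1 + r2) T1 T2 + dist_r (r1 + r2 + r3) T2 T3)"
proof -
  have t1: "is_tiling T1" using assms(2) unfolding tiling_space_def by simp
  have t2: "is_tiling T2" using assms(3) unfolding tiling_space_def by simp
  have a: "\<forall>r>0. dist_r r T1 T1 = 0" using part1 by blast
  have b: "\<forall>r1 r2. 0 < r1 \<and> r1 \<le> r2 \<longrightarrow> dist_r r1 T1 T2 \<le> dist_r r2 T1 T2" using part2a by blast
  have c: "\<forall>r e. r > 0 \<and> dist_r r T1 T2 < ereal e \<longrightarrow>
          (\<exists>\<delta>>0. dist_r (r + \<delta>) T1 T2 < ereal e)" using part2b[OF t1 t2] by blast
  have d: "\<forall>r1 r2 r3. r1 > 0 \<and> r2 > 0 \<and> r3 > 0 \<and>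
          dist_r (r1 + r2) T1 T2 < ereal r3 \<and> dist_r (r1 + r2 + r3) T2 T3 < ereal r2 \<longrightarrow>
          dist_r r1 T1 T3 \<le> dist_r (r1 + r2) T1 T2 + dist_r (r1 + r2 + r3) T2 T3"
  proof (intro allI impI)
    fix r1 r2 r3 :: real
    assume h: "r1 > 0 \<and> r2 > 0 \<and> r3 > 0 \<and>
          dist_r (r1 + r2) T1 T2 < ereal r3 \<and> dist_r (r1 + r2 + r3) T2 T3 < ereal r2"
    then show "dist_r r1 T1 T3 \<le> dist_r (r1 + r2) T1 T2 + dist_r (r1 + r2 + r3) T2 T3"
      using part3[of r2 r1 T1 T2 r3 T3] by blast
  qed
  show ?thesis using a b c d by (intro conjI)
qed

end
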